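(* Assume $\sum_kkq_k<2$ and that there is $R>1$ with $\sum_kR^kp_k<\infty$ and $\sum_kR^kq_k<\infty$. Let $z^*:=\inf\{z\in[1,2]:\Psi(z)=0\}$ with $\inf\emptyset=\infty$. Then $z^*\in[1,2]$, $\Psi(z^* )=0$, $\Phi(z^* )\ge0$, $\Phi(0)=\Psi(0)=0$, and $\Psi(z)\ge0$ for every $z\in[0,z^*]$. Furthermore, if there exists an odd number $k$ such that $q_k>0$, then $z^*<2$.
   Context: $\beta_{\mathrm o}\ge0$, $(p_k)_{k\ge0}$ a probability law on $\mathbb Z_+$, $\beta_{\mathrm c}>0$, $(q_k)_{k\ge0}$ a probability law on $\mathbb Z_+$, with the convention $p_1=q_2=0$. $\Phi(z):=\beta_{\mathrm o}\big(\sum_{k\ge0}p_k(1-z)^k-(1-z)\big)$ and $\Psi(z):=\beta_{\mathrm c}\big(\sum_{k\ge0}q_k(1-z)^k-(1-z)^2\big)$ for $z$ where the series converge absolutely. *)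

theory Defs
  imports "HOL-Analysis.Analysis" "HOL-Library.Extended_Real"
begin

text \<open>Phi(z) = beta_o (sum_k p_k (1-z)^k - (1-z)); Psi(z) = beta_c (sum_k q_k (1-z)^k - (1-z)^2).
  The series are used only where they converge absolutely.\<close>

definition Phi :: "real \<Rightarrow> (nat \<Rightarrow> real) \<Rightarrow> real \<Rightarrow> real" where
  "Phi \<beta>o p z = \<beta>o * ((\<Sum>k. p k * (1 - z) ^ k) - (1 - z))"

definition Psi :: "real \<Rightarrow> (nat \<Rightarrow> real) \<Rightarrow> real \<Rightarrow> real" where
  "Psi \<beta>c q z = \<beta>c * ((\<Sum>k. q k * (1 - z) ^ k) - (1 - z) ^ 2)"

definition zstar :: "real \<Rightarrow> (nat \<Rightarrow> real) \<Rightarrow> ereal" where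
  "zstar \<beta>c q = (if {z \<in> {1..2}. Psi \<beta>c q z = 0} = {} then \<infinity>
                   else ereal (Inf {z \<in> {1..2}. Psi \<beta>c q z = 0}))"

definition prob_law :: "(nat \<Rightarrow> real) \<Rightarrow> bool" where
  "prob_law p \<longleftrightarrow> (\<forall>k. 0 \<le> p k) \<and> p sums 1"

end

theory Submission
  imports Defs
begin

lemma bern_aux:
  fixes s :: real assumes "0 \<le> s" "s \<le> 1"
  shows "1 - s ^ n \<le> real n * (1 - s)"
proof (induction n)
  case 0 then show ?case by simp
next
  case (Suc n)
  have "s ^ n * (1 - s) \<le> 1 - s" using assms by (simp add: mult_left_le_one_le power_le_one)
  then show ?case using Suc by (simp add: algebra_simps)
qed

lemma pt_aux:
  fixes s :: real assumes "0 \<le> s" "s \<le> 1"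
  shows "s ^ k - s ^ 2 \<ge> (2 - real k) * (1 - s) * s ^ 2"
proof (cases "k \<ge> 3")
  case True
  define n where "n = k - 2"
  have k: "k = n + 2" using True unfolding n_def by simp
  have "s^2 * (1 - s ^ n) \<le> s^2 * (real n * (1 - s))"
    using bern_aux[OF assms, of n] by (intro mult_left_mono) auto
  then show ?thesis unfolding k by (simp add: algebra_simps power_add power2_eq_square)
next
  case False
  then have "k = 0 \<or> k = 1 \<or> k = 2" by auto
  then show ?thesis
  proof (elim disjE)
    assume "k = 0"
    have a: "s * s \<le> s" using assms by (simp add: mult_left_le_one_le)
    have "(1 - s) * (2 * (s * s)) \<le> (1 - s) * (1 + s)" using a assms by (intro mult_left_mono) auto
    then show ?thesis using \<open>k = 0\<close> by (simp add: algebra_simps power2_eq_square)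
  next
    assume "k = 1"
    have a: "s * s \<le> s" using assms by (simp add: mult_left_le_one_le)
    have "(1 - s) * (s * s) \<le> (1 - s) * s" using a assms by (intro mult_left_mono) auto
    then show ?thesis using \<open>k = 1\<close> by (simp add: algebra_simps power2_eq_square)
  qed simp
qed

lemma G_ge:
  fixes q :: "nat \<Rightarrow> real" and s :: real
  assumes "prob_law q" "summable (\<lambda>k. real k * q k)" "(\<Sum>k. real k * q k) < 2"
    and "0 \<le> s" "s \<le> 1"
  shows "(\<Sum>k. q k * s ^ k) \<ge> s ^ 2"
proof -
  have q0: "\<And>k. 0 \<le> q k" and qs: "q sums 1" using assms(1) unfolding prob_law_def by auto
  have sq: "summable q" using qs by (simp add: sums_iff)
  have s1: "summable (\<lambda>k. q k * s ^ k)"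
    by (rule summable_comparison_test'[OF sq]) (use q0 assms in \<open>auto simp: abs_mult power_le_one intro!: mult_right_le_one_le\<close>)
  have s2: "summable (\<lambda>k. q k * s ^ 2)" using sq by (rule summable_mult2)
  have s3: "summable (\<lambda>k. q k * ((2 - real k) * (1 - s) * s ^ 2))"
  proof -
    have "summable (\<lambda>k. (2 * q k - real k * q k) * ((1 - s) * s ^ 2))"
      by (intro summable_mult2 summable_diff summable_mult sq assms(2))
    then show ?thesis by (simp add: algebra_simps)
  qed
  have "(\<Sum>k. q k * ((2 - real k) * (1 - s) * s ^ 2)) = (\<Sum>k. (2 * q k - real k * q k) * ((1 - s) * s ^ 2))"
    by (simp add: algebra_simps)
  also have "\<dots> = (\<Sum>k. (2 * q k - real k * q k)) * ((1 - s) * s ^ 2)"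
    by (intro suminf_mult2[symmetric] summable_diff summable_mult sq assms(2))
  also have "(\<Sum>k. (2 * q k - real k * q k)) = 2 * 1 - (\<Sum>k. real k * q k)"
    using suminf_diff[OF summable_mult[OF sq, of 2] assms(2)] suminf_mult[OF sq, of 2] qs
    by (simp add: sums_iff)
  finally have e1: "(\<Sum>k. q k * ((2 - real k) * (1 - s) * s ^ 2)) = (2 - (\<Sum>k. real k * q k)) * ((1 - s) * s ^ 2)"
    by simp
  have "0 \<le> (2 - (\<Sum>k. real k * q k)) * ((1 - s) * s ^ 2)" using assms by auto
  also have "\<dots> \<le> (\<Sum>k. q k * (s ^ k - s ^ 2))"
    unfolding e1[symmetric]
    by (intro suminf_le s3 summable_diff mult_left_mono pt_aux q0 assms)
       (use summable_diff[OF s1 s2] in \<open>simp_all add: right_diff_distrib\<close>)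
  also have "\<dots> = (\<Sum>k. q k * s ^ k) - (\<Sum>k. q k * s ^ 2)"
    using suminf_diff[OF s1 s2] by (simp add: right_diff_distrib)
  also have "(\<Sum>k. q k * s ^ 2) = s ^ 2" using suminf_mult2[OF sq, of "s^2"] qs by (simp add: sums_iff)
  finally show ?thesis by simp
qed

lemma pow_ge_neg:
  fixes s :: real assumes "-1 \<le> s" "s \<le> 0"
  shows "s \<le> s ^ k"
proof (cases k)
  case 0 then show ?thesis using assms by simp
next
  case (Suc m)
  have "\<bar>s\<bar> ^ m \<le> 1" by (rule power_le_one) (use assms in auto)
  then have "\<bar>s\<bar> * \<bar>s\<bar> ^ m \<le> \<bar>s\<bar>" by (simp add: mult_right_le_one_le)
  then have "\<bar>s ^ k\<bar> \<le> \<bar>s\<bar>" using Suc by (simp add: power_abs abs_mult)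
  then show ?thesis using assms by linarith
qed

lemma summ_unit:
  fixes q :: "nat \<Rightarrow> real" assumes "prob_law q" "\<bar>s\<bar> \<le> 1"
  shows "summable (\<lambda>k. q k * s ^ k)"
proof -
  have q0: "\<And>k. 0 \<le> q k" and qs: "q sums 1" using assms(1) unfolding prob_law_def by auto
  have sq: "summable q" using qs by (simp add: sums_iff)
  show ?thesis
    by (rule summable_comparison_test'[OF sq])
       (use q0 assms in \<open>auto simp: abs_mult power_abs power_le_one intro!: mult_right_le_one_le\<close>)
qed

lemma F_ge:
  fixes p :: "nat \<Rightarrow> real" assumes "prob_law p" "-1 \<le> s" "s \<le> 0"
  shows "s \<le> (\<Sum>k. p k * s ^ k)"
proof -
  have p0: "\<And>k. 0 \<le> p k" and ps: "p sums 1" using assms(1) unfolding prob_law_def by auto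
  have sp: "summable p" using ps by (simp add: sums_iff)
  have s1: "summable (\<lambda>k. p k * s ^ k)" by (rule summ_unit) (use assms in auto)
  have "(\<Sum>k. p k * s) \<le> (\<Sum>k. p k * s ^ k)"
    by (intro suminf_le s1 summable_mult2 sp mult_left_mono pow_ge_neg p0 assms)
  moreover have "(\<Sum>k. p k * s) = s" using suminf_mult2[OF sp, of s] ps by (simp add: sums_iff)
  ultimately show ?thesis by simp
qed

theorem lemma3p1:
  fixes \<beta>o \<beta>c R :: real and p q :: "nat \<Rightarrow> real"
  assumes "\<beta>o \<ge> 0" and "prob_law p" and "\<beta>c > 0" and "prob_law q"
    and "p 1 = 0" and "q 2 = 0"
    and "summable (\<lambda>k. real k * q k)" and "(\<Sum>k. real k * q k) < 2"
    and "R > 1" and "summable (\<lambda>k. R ^ k * p k)" and "summable (\<lambda>k. R ^ k * q k)"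
  shows "\<exists>z. zstar \<beta>c q = ereal z \<and> 1 \<le> z \<and> z \<le> 2
           \<and> Psi \<beta>c q z = 0 \<and> Phi \<beta>o p z \<ge> 0
           \<and> Phi \<beta>o p 0 = 0 \<and> Psi \<beta>c q 0 = 0
           \<and> (\<forall>y\<in>{0..z}. Psi \<beta>c q y \<ge> 0)
           \<and> ((\<exists>k. odd k \<and> q k > 0) \<longrightarrow> z < 2)"
proof -
  have q0: "\<And>k. 0 \<le> q k" and qs: "q sums 1" using assms(4) unfolding prob_law_def by auto
  have sq: "summable q" using qs by (simp add: sums_iff)
  have ps: "p sums 1" using assms(2) unfolding prob_law_def by auto
  let ?P = "Psi \<beta>c q"
  have cont: "isCont ?P z" if "0 \<le> z" "z \<le> 2" for z
  proof -
    have "summable (\<lambda>n. q n * R ^ n)" using assms(11) by (simp add: mult.commute)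
    then have "isCont (\<lambda>x. \<Sum>n. q n * x ^ n) (1 - z)"
      by (rule isCont_powser) (use that assms(9) in auto)
    then have "isCont (\<lambda>z. \<Sum>n. q n * (1 - z) ^ n) z"
      by (rule isCont_o2[rotated]) (intro continuous_intros)
    then show ?thesis unfolding Psi_def[abs_def] by (intro continuous_intros)
  qed
  have P0: "?P 0 = 0" using qs by (simp add: Psi_def sums_iff)
  have Phi0: "Phi \<beta>o p 0 = 0" using ps by (simp add: Phi_def sums_iff)
  have P1: "?P 1 \<ge> 0" using q0[of 0] assms(3) by (simp add: Psi_def)
  have G2: "(\<Sum>k. q k * (-1) ^ k) \<le> 1"
  proof -
    have "(\<Sum>k. q k * (-1) ^ k) \<le> (\<Sum>k. q k)"
      by (intro suminf_le summ_unit assms(4) sq) (use q0 in \<open>simp_all add: minus_one_power_iff\<close>)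
    then show ?thesis using qs by (simp add: sums_iff)
  qed
  have P2: "?P 2 \<le> 0" using G2 assms(3) by (simp add: Psi_def mult_le_0_iff)
  define S where "S = {z \<in> {1..2}. ?P z = 0}"
  obtain z0 where z0: "1 \<le> z0" "z0 \<le> 2" "?P z0 = 0"
    using IVT2[of ?P 2 0 1] P1 P2 cont by auto
  have Sne: "S \<noteq> {}" using z0 unfolding S_def by auto
  have Sbdd: "bdd_below S" unfolding S_def by (rule bdd_belowI[of _ 1]) auto
  have Scl: "closed S" unfolding S_def
    by (intro continuous_closed_preimage_constant continuous_at_imp_continuous_on ballI cont closed_atLeastAtMost) auto
  define z where "z = Inf S"
  have zS: "z \<in> S" unfolding z_def by (rule closed_contains_Inf[OF Sne Sbdd Scl])
  have zle: "\<And>x. x \<in> S \<Longrightarrow> z \<le> x" unfolding z_def by (rule cInf_lower[OF _ Sbdd])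
  have zst: "zstar \<beta>c q = ereal z" using Sne unfolding zstar_def S_def z_def by simp
  from zS have z12: "1 \<le> z" "z \<le> 2" and Pz: "?P z = 0" unfolding S_def by auto
  have Phiz: "Phi \<beta>o p z \<ge> 0"
    using F_ge[OF assms(2), of "1 - z"] z12 assms(1) by (simp add: Phi_def)
  have nonneg: "?P y \<ge> 0" if "0 \<le> y" "y \<le> z" for y
  proof (cases "y \<le> 1")
    case True
    have "(1 - y)^2 \<le> (\<Sum>k. q k * (1 - y) ^ k)"
      by (rule G_ge[OF assms(4) assms(7) assms(8)]) (use True that in auto)
    then show ?thesis using assms(3) by (simp add: Psi_def)
  next
    case False
    show ?thesis
    proof (rule ccontr)
      assume "\<not> 0 \<le> ?P y"
      then have "?P y \<le> 0" by simp
      have "\<exists>x. 1 \<le> x \<and> x \<le> y \<and> ?P x = 0"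
      proof (rule IVT2)
        show "?P y \<le> 0" by fact
        show "0 \<le> ?P 1" by (rule P1)
        show "1 \<le> y" using False by simp
        show "\<forall>x. 1 \<le> x \<and> x \<le> y \<longrightarrow> isCont ?P x"
          using cont \<open>y \<le> z\<close> z12 by auto
      qed
      then obtain x where x: "1 \<le> x" "x \<le> y" "?P x = 0" by blast
      then have "x \<in> S" using that z12 unfolding S_def by auto
      then have "z \<le> x" by (rule zle)
      then have "x = y" using x that by simp
      then show False using x \<open>\<not> 0 \<le> ?P y\<close> by simp
    qed
  qed
  have odd: "z < 2" if hk: "\<exists>k. odd k \<and> q k > 0"
  proof -
    obtain k where k: "odd k" "q k > 0" using hk by blast
    have s1: "summable (\<lambda>k. q k * (-1) ^ k)" by (rule summ_unit[OF assms(4)]) simp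
    have "0 < (\<Sum>j. q j - q j * (-1) ^ j)"
    proof (rule suminf_pos2[of _ k])
      show "summable (\<lambda>j. q j - q j * (-1) ^ j)" using summable_diff[OF sq s1] .
      show "0 \<le> q n - q n * (-1) ^ n" for n using q0[of n] by (simp add: minus_one_power_iff)
      show "0 < q k - q k * (-1) ^ k" using k by simp
    qed
    also have "\<dots> = 1 - (\<Sum>j. q j * (-1) ^ j)" using suminf_diff[OF sq s1] qs by (simp add: sums_iff)
    finally have "?P 2 < 0" using assms(3) by (simp add: Psi_def mult_less_0_iff)
    then have "z \<noteq> 2" using Pz by auto
    then show ?thesis using z12 by simp
  qed
  have nn: "\<forall>y\<in>{0..z}. 0 \<le> ?P y" using nonneg by auto
  have od: "(\<exists>k. odd k \<and> q k > 0) \<longrightarrow> z < 2" using odd by blast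
  show ?thesis
    by (rule exI[of _ z], intro conjI zst z12 Pz Phiz Phi0 P0 nn od)
qed

end
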